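(* Let $F_A=\sum_{i=0}^n\prod_{j=0}^n x_j^{a_{ij}}$ be an invertible polynomial satisfying the Calabi–Yau condition. Let $q_0,\dots,q_n$ be the dual weights (the weights of the transpose matrix $A^T$) and $d^T=\sum_{j=0}^n q_j$. Let $\Xi=\{(A^T)^{-1}\vec v : \vec v\in\mathbb{Z}^{n+1},\ v_0,\dots,v_n\ge1\}$ and $\mathrm{age}(\vec\xi)=\sum_i\xi_i$. Then the set $\{\vec\xi\in\Xi:\mathrm{age}(\vec\xi)=1\}$ consists of exactly one element, namely $\left(\frac{q_0}{d^T},\dots,\frac{q_n}{d^T}\right)$.
   Context: A polynomial $F_A=\sum_{i=0}^n\prod_{j=0}^n x_j^{a_{ij}}$ (one monomial per row of the nonnegative integer matrix $A$) is called invertible if $A$ is invertible, there exist positive integers $r_0,\dots,r_n$ (weights) such that $d:=\sum_{j=0}^n r_j a_{ij}$ is the same for every $i$, and $F_A$ has exactly one critical point, at the origin. It satisfies the Calabi–Yau condition if $d=\sum_{j=0}^n r_j$. The transpose $A^T$ then also defines an invertible polynomial satisfying the Calabi–Yau condition; its weights $q_0,\dots,q_n$ (positive integers with $\sum_{j} q_j a_{ji}=d^T$ for all $i$, where $d^T=\sum_j q_j$) are called the dual weights. *)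

theory Defs
  imports "HOL-Analysis.Analysis"
begin

text \<open>Exponent matrices are integer matrices indexed by a finite type 'n
  (standing for the index set {0,...,n}); nonnegativity is required separately.\<close>

definition nonneg_mat :: "int ^'n ^'n \<Rightarrow> bool" where
  "nonneg_mat A \<longleftrightarrow> (\<forall>i j. A $ i $ j \<ge> 0)"

definition real_mat :: "int ^'n ^'n \<Rightarrow> real ^'n ^'n" where
  "real_mat A = (\<chi> i j. real_of_int (A $ i $ j))"

definition polyF :: "int ^'n ^'n \<Rightarrow> complex ^'n \<Rightarrow> complex" where
  "polyF A x = (\<Sum>i\<in>UNIV. \<Prod>j\<in>UNIV. (x $ j) ^ nat (A $ i $ j))"

definition critical_point :: "(complex ^'n \<Rightarrow> complex) \<Rightarrow> complex ^'n \<Rightarrow> bool" where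
  "critical_point F x \<longleftrightarrow> (F has_derivative (\<lambda>_. 0)) (at x)"

definition is_weight_system :: "int ^'n ^'n \<Rightarrow> ('n \<Rightarrow> nat) \<Rightarrow> nat \<Rightarrow> bool" where
  "is_weight_system A r d \<longleftrightarrow>
     (\<forall>j. r j > 0) \<and> (\<forall>i. (\<Sum>j\<in>UNIV. int (r j) * A $ i $ j) = int d)"

definition invertible_poly :: "int ^'n ^'n \<Rightarrow> bool" where
  "invertible_poly A \<longleftrightarrow>
     nonneg_mat A \<and> invertible (real_mat A) \<and>
     (\<exists>r d. is_weight_system A r d) \<and>
     {x. critical_point (polyF A) x} = {0}"

definition calabi_yau :: "int ^'n ^'n \<Rightarrow> bool" where
  "calabi_yau A \<longleftrightarrow> (\<exists>r. is_weight_system A r (\<Sum>j\<in>UNIV. r j))"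

definition Xi :: "int ^'n ^'n \<Rightarrow> (real ^'n) set" where
  "Xi A = {matrix_inv (transpose (real_mat A)) *v (\<chi> i. real_of_int (v $ i)) | v :: int ^'n.
            \<forall>i. v $ i \<ge> 1}"

definition age :: "real ^'n \<Rightarrow> real" where
  "age \<xi> = (\<Sum>i\<in>UNIV. \<xi> $ i)"

end

theory Submission
  imports Defs
begin

lemma minv_props:
  fixes T :: "real ^'n ^'n"
  assumes "invertible T"
  shows "T ** matrix_inv T = mat 1 \<and> matrix_inv T ** T = mat 1"
  using assms unfolding invertible_def matrix_inv_def by (rule someI_ex)

theorem mainTheorem2:
  fixes A :: "int ^'n ^'n" and q :: "'n \<Rightarrow> nat"
  assumes "invertible_poly A"
    and "calabi_yau A"
    and "is_weight_system (transpose A) q (\<Sum>j\<in>UNIV. q j)"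
  shows "{\<xi> \<in> Xi A. age \<xi> = 1} =
         {\<chi> j. real (q j) / real (\<Sum>k\<in>UNIV. q k)}"
proof -
  have fin: "finite (UNIV::'n set)" by simp
  define B where "B = real_mat A"
  define M where "M = matrix_inv (transpose B)"
  have invB: "invertible B" using assms(1) unfolding invertible_poly_def B_def by auto
  have invT: "invertible (transpose B)" using transpose_invertible[OF invB] .
  have Mleft: "M ** transpose B = mat 1" and Mright: "transpose B ** M = mat 1"
    using minv_props[OF invT] unfolding M_def by auto
  obtain r where r: "is_weight_system A r (\<Sum>j\<in>UNIV. r j)"
    using assms(2) unfolding calabi_yau_def by auto
  define d where "d = (\<Sum>j\<in>UNIV. r j)"
  have rpos: "\<And>j. r j > 0" using r unfolding is_weight_system_def by auto
  have dpos: "real d > 0"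
    unfolding d_def using rpos by (simp add: sum_pos)
  have qpos: "\<And>j. q j > 0" using assms(3) unfolding is_weight_system_def by auto
  define dT where "dT = (\<Sum>k\<in>UNIV. q k)"
  have dTpos: "real dT > 0"
    unfolding dT_def using qpos by (simp add: sum_pos)
  define rv where "rv = (\<chi> j. real (r j))"
  define qv where "qv = (\<chi> j. real (q j))"
  define one :: "real ^'n" where "one = (\<chi> i. 1)"
  have Br: "B *v rv = real d *\<^sub>R one"
  proof -
    have "(B *v rv) $ i = real d" for i
    proof -
      have "(\<Sum>j\<in>UNIV. int (r j) * A $ i $ j) = int d"
        using r unfolding is_weight_system_def d_def by auto
      hence "real_of_int (\<Sum>j\<in>UNIV. int (r j) * A $ i $ j) = real d" by simp
      thus ?thesis unfolding B_def real_mat_def rv_def matrix_vector_mult_def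
        by (simp add: mult.commute)
    qed
    thus ?thesis by (simp add: vec_eq_iff one_def)
  qed
  have BTq: "transpose B *v qv = real dT *\<^sub>R one"
  proof -
    have "(transpose B *v qv) $ i = real dT" for i
    proof -
      have "(\<Sum>j\<in>UNIV. int (q j) * transpose A $ i $ j) = int dT"
        using assms(3) unfolding is_weight_system_def dT_def by auto
      hence "real_of_int (\<Sum>j\<in>UNIV. int (q j) * transpose A $ i $ j) = real dT" by simp
      thus ?thesis unfolding B_def real_mat_def qv_def matrix_vector_mult_def transpose_def
        by (simp add: mult.commute)
    qed
    thus ?thesis by (simp add: vec_eq_iff one_def)
  qed
  have Mone: "M *v one = (1 / real dT) *\<^sub>R qv"
  proof -
    have "M *v (transpose B *v qv) = qv"
      by (simp only: matrix_vector_mul_assoc Mleft matrix_vector_mul_lid)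
    hence "real dT *\<^sub>R (M *v one) = qv"
      using BTq by (simp add: matrix_vector_mult_scaleR)
    thus ?thesis using dTpos by (auto simp: vec_eq_iff field_simps)
  qed
  have oneM: "one v* M = (1 / real d) *\<^sub>R rv"
  proof -
    have "rv v* transpose B = real d *\<^sub>R one" using Br by simp
    have "(rv v* transpose B) v* M = rv" by (simp only: vector_matrix_mul_assoc Mright vector_matrix_mul_rid)
    hence "(real d *\<^sub>R one) v* M = rv" using \<open>rv v* transpose B = real d *\<^sub>R one\<close> by simp
    hence "real d *\<^sub>R (one v* M) = rv"
      by (simp add: vector_matrix_mult_def vec_eq_iff sum_distrib_left mult.assoc)
    thus ?thesis using dpos by (auto simp: vec_eq_iff field_simps)
  qed
  have age_eq: "age (M *v w) = (\<Sum>j\<in>UNIV. real (r j) * w $ j) / real d" for w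
  proof -
    have "age (M *v w) = inner one (M *v w)"
      unfolding age_def one_def inner_vec_def by simp
    also have "\<dots> = inner (one v* M) w" by (simp add: dot_lmul_matrix)
    also have "\<dots> = (\<Sum>j\<in>UNIV. real (r j) * w $ j) / real d"
      unfolding oneM rv_def inner_vec_def by (simp add: sum_divide_distrib)
    finally show ?thesis .
  qed
  show ?thesis
  proof (intro set_eqI iffI)
    fix \<xi> assume "\<xi> \<in> {\<xi> \<in> Xi A. age \<xi> = 1}"
    then obtain v :: "int ^'n" where v1: "\<forall>i. v $ i \<ge> 1"
      and xi: "\<xi> = M *v (\<chi> i. real_of_int (v $ i))" and ag: "age \<xi> = 1"
      unfolding Xi_def M_def B_def by auto
    have "(\<Sum>j\<in>UNIV. real (r j) * real_of_int (v $ j)) / real d = 1"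
      using ag xi age_eq by simp
    hence "(\<Sum>j\<in>UNIV. real (r j) * real_of_int (v $ j)) = (\<Sum>j\<in>UNIV. real (r j))"
      using dpos unfolding d_def by (simp add: field_simps)
    hence s0: "(\<Sum>j\<in>UNIV. real (r j) * (real_of_int (v $ j) - 1)) = 0"
      by (simp add: algebra_simps sum_subtractf)
    have nn: "\<And>j. j \<in> UNIV \<Longrightarrow> 0 \<le> real (r j) * (real_of_int (v $ j) - 1)"
      using v1 by simp
    have "\<forall>j\<in>UNIV. real (r j) * (real_of_int (v $ j) - 1) = 0"
      using sum_nonneg_eq_0_iff[OF fin nn] s0 by simp
    hence allj: "\<forall>j. real (r j) * (real_of_int (v $ j) - 1) = 0" by blast
    have vj: "real_of_int (v $ j) = 1" for j
    proof -
      have "real (r j) \<noteq> 0" using rpos[of j] by simp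
      moreover have "real (r j) * (real_of_int (v $ j) - 1) = 0" using allj by blast
      ultimately show ?thesis by simp
    qed
    have "(\<chi> i. real_of_int (v $ i)) = one" unfolding one_def vec_eq_iff using vj by simp
    hence "\<xi> = (1 / real dT) *\<^sub>R qv" using xi Mone by simp
    thus "\<xi> \<in> {\<chi> j. real (q j) / real (\<Sum>k\<in>UNIV. q k)}"
      unfolding qv_def dT_def by (simp add: vec_eq_iff)
  next
    fix \<xi> assume "\<xi> \<in> {\<chi> j. real (q j) / real (\<Sum>k\<in>UNIV. q k)}"
    hence "\<xi> = (1 / real dT) *\<^sub>R qv" unfolding qv_def dT_def by (simp add: vec_eq_iff)
    hence xi: "\<xi> = M *v one" using Mone by simp
    define ones :: "int ^'n" where "ones = (\<chi> i. 1)"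
    have one': "(\<chi> i. real_of_int (ones $ i)) = one" unfolding one_def ones_def by (simp add: vec_eq_iff)
    have "\<xi> = matrix_inv (transpose (real_mat A)) *v (\<chi> i. real_of_int (ones $ i))"
      unfolding one' xi M_def B_def ..
    moreover have "\<forall>i. ones $ i \<ge> 1" unfolding ones_def by simp
    ultimately have "\<xi> \<in> Xi A" unfolding Xi_def by blast
    moreover have "age \<xi> = 1"
    proof -
      have "age \<xi> = (\<Sum>j\<in>UNIV. real (r j) * one $ j) / real d" using xi age_eq by simp
      also have "\<dots> = (\<Sum>j\<in>UNIV. real (r j)) / real d" unfolding one_def by simp
      also have "\<dots> = 1" using dpos unfolding d_def by simp
      finally show ?thesis .
    qed
    ultimately show "\<xi> \<in> {\<xi> \<in> Xi A. age \<xi> = 1}" by simp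
  qed
qed

end
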